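(* Work in Scenario 1. For a profile of reported types $\mathbf t=(t_1,\dots,t_n)\in T$ (all bidders participating) and $i,j\in N$ with $j\ne i$, define $$W_j(\mathbf t)=v_j-\sum_{k\in N\setminus\{j\}}\eta_{k\leftarrow j},\qquad W_j^{-i}(\mathbf t)=v_j-\sum_{k\in N\setminus\{i,j\}}\eta_{k\leftarrow j},$$ where $\eta_{k\leftarrow j}$ is the value reported by bidder $k$. Consider the mechanism $x_j(\mathbf t)=\mathbf 1\{W_j(\mathbf t)\ge 0\}$ for all $j$; $$p_i(\mathbf t)=\sum_{j\in N\setminus\{i\}}\Big[W_j^{-i}(\mathbf t)\big(\mathbf 1\{W_j^{-i}(\mathbf t)\ge0\}-\mathbf 1\{W_j(\mathbf t)\ge0\}\big)+\eta_{j\leftarrow i}\,\mathbf 1\{W_i(\mathbf t)\ge0\}\Big];$$ and, when bidder $i$ does not participate, $x_i(\emptyset,\mathbf t_{-i})=p_i(\emptyset,\mathbf t_{-i})=0$ and $x_j(\emptyset,\mathbf t_{-i})=\mathbf 1\{W_j^{-i}(\mathbf t)\ge0\}$ for $j\neq i$. Then: (a) for every $\mathbf t\in T$, $\mathbf x(\mathbf t)$ maximizes the social welfare $\mathrm{SW}(\mathbf z;\mathbf t)=\sum_{i\in N}\nu_i(\mathbf z)$ over $\mathbf z\in[0,1]^n$; (b) the mechanism is DSIC; (c) it is ex-post IR; (d) $p_i(\mathbf t)\ge0$ for all $i\in N$ and $\mathbf t\in T$.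
   Context: Model: there are $n$ bidders $N=\{1,\dots,n\}$ and a seller of a freely replicable good; an allocation is any $\mathbf x=(x_1,\dots,x_n)\in[0,1]^n$ (no constraint coupling coordinates). Bidder $i$ has a value $v_i\in[\underline v_i,\bar v_i]\subset\mathbb R_{\ge0}$ and, for each $j\ne i$, an externality parameter $\eta_{i\leftarrow j}\in[\underline\eta_{i\leftarrow j},\bar\eta_{i\leftarrow j}]\subset\mathbb R_{\ge0}$; her valuation is $\nu_i(\mathbf x)=v_ix_i-\sum_{j\ne i}\eta_{i\leftarrow j}x_j$ and her utility with payment $p_i$ is $u_i(\mathbf x,p_i;\mathbf t)=\nu_i(\mathbf x)-p_i$ (evaluated at the true parameters). In Scenario 1, bidder $i$'s private type is $t_i=(v_i,(\eta_{i\leftarrow j})_{j\ne i})\in T_i=[\underline v_i,\bar v_i]\times\prod_{j\ne i}[\underline\eta_{i\leftarrow j},\bar\eta_{i\leftarrow j}]$; $T=\prod_iT_i$. Bids lie in $B_i=T_i\cup\{\emptyset\}$ ($\emptyset$ = non-participation). A mechanism is an allocation function $\mathbf x:B\to[0,1]^n$ and payment function $\mathbf p:B\to\mathbb R^n_{\ge0}$ with $x_i=p_i=0$ whenever bidder $i$ bids $\emptyset$; it is specified on bid profiles with at most one $\emptyset$. DSIC: for all $\mathbf t,\hat{\mathbf t}\in T$ and $i$, $u_i(\mathbf x(t_i,\hat{\mathbf t}_{-i}),p_i(t_i,\hat{\mathbf t}_{-i});\mathbf t)\ge u_i(\mathbf x(\hat{\mathbf t}),p_i(\hat{\mathbf t});\mathbf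 t)$. Ex-post IR: for all $\mathbf t\in T$ and $i$, $u_i(\mathbf x(\mathbf t),p_i(\mathbf t);\mathbf t)\ge u_i(\mathbf x(\emptyset,\mathbf t_{-i}),p_i(\emptyset,\mathbf t_{-i});\mathbf t)$. *)

theory Defs
  imports Main "HOL-Library.Product_Plus" Complex_Main
begin

text \<open>Bidders are 0, ..., n-1. A (reported or true) type profile is given by
  v :: nat => real (v i = value of bidder i) and
  e :: nat => nat => real (e i j = externality parameter eta_{i <- j}, reported by bidder i).
  Bidder i's type is (v i, e i).\<close>

definition ind :: "bool \<Rightarrow> real" where
  "ind b = (if b then 1 else 0)"

definition in_T :: "nat \<Rightarrow> (nat \<Rightarrow> real) \<Rightarrow> (nat \<Rightarrow> real) \<Rightarrow> (nat \<Rightarrow> nat \<Rightarrow> real) \<Rightarrow> (nat \<Rightarrow> nat \<Rightarrow> real)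
    \<Rightarrow> (nat \<Rightarrow> real) \<Rightarrow> (nat \<Rightarrow> nat \<Rightarrow> real) \<Rightarrow> bool" where
  "in_T n vlo vhi elo ehi v e \<longleftrightarrow>
     (\<forall>i<n. vlo i \<le> v i \<and> v i \<le> vhi i \<and>
        (\<forall>j<n. j \<noteq> i \<longrightarrow> elo i j \<le> e i j \<and> e i j \<le> ehi i j))"

definition valuation :: "nat \<Rightarrow> (nat \<Rightarrow> real) \<Rightarrow> (nat \<Rightarrow> nat \<Rightarrow> real) \<Rightarrow> nat \<Rightarrow> (nat \<Rightarrow> real) \<Rightarrow> real" where
  "valuation n v e i x = v i * x i - (\<Sum>j\<in>{0..<n} - {i}. e i j * x j)"

definition utility :: "nat \<Rightarrow> (nat \<Rightarrow> real) \<Rightarrow> (nat \<Rightarrow> nat \<Rightarrow> real) \<Rightarrow> nat \<Rightarrow> (nat \<Rightarrow> real) \<Rightarrow> real \<Rightarrow> real" where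
  "utility n v e i x p = valuation n v e i x - p"

definition social_welfare :: "nat \<Rightarrow> (nat \<Rightarrow> real) \<Rightarrow> (nat \<Rightarrow> nat \<Rightarrow> real) \<Rightarrow> (nat \<Rightarrow> real) \<Rightarrow> real" where
  "social_welfare n v e z = (\<Sum>i\<in>{0..<n}. valuation n v e i z)"

definition W :: "nat \<Rightarrow> (nat \<Rightarrow> real) \<Rightarrow> (nat \<Rightarrow> nat \<Rightarrow> real) \<Rightarrow> nat \<Rightarrow> real" where
  "W n v e j = v j - (\<Sum>k\<in>{0..<n} - {j}. e k j)"

definition Wm :: "nat \<Rightarrow> (nat \<Rightarrow> real) \<Rightarrow> (nat \<Rightarrow> nat \<Rightarrow> real) \<Rightarrow> nat \<Rightarrow> nat \<Rightarrow> real" where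
  "Wm n v e i j = v j - (\<Sum>k\<in>{0..<n} - {i, j}. e k j)"

definition alloc :: "nat \<Rightarrow> (nat \<Rightarrow> real) \<Rightarrow> (nat \<Rightarrow> nat \<Rightarrow> real) \<Rightarrow> nat \<Rightarrow> real" where
  "alloc n v e j = ind (W n v e j \<ge> 0)"

definition pay :: "nat \<Rightarrow> (nat \<Rightarrow> real) \<Rightarrow> (nat \<Rightarrow> nat \<Rightarrow> real) \<Rightarrow> nat \<Rightarrow> real" where
  "pay n v e i = (\<Sum>j\<in>{0..<n} - {i}.
      Wm n v e i j * (ind (Wm n v e i j \<ge> 0) - ind (W n v e j \<ge> 0))
      + e j i * ind (W n v e i \<ge> 0))"

text \<open>The mechanism when bidder i bids the empty bid (others as in the profile v, e;
  bidder i's own entries are not used).\<close>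
definition alloc_out :: "nat \<Rightarrow> (nat \<Rightarrow> real) \<Rightarrow> (nat \<Rightarrow> nat \<Rightarrow> real) \<Rightarrow> nat \<Rightarrow> nat \<Rightarrow> real" where
  "alloc_out n v e i j = (if j = i then 0 else ind (Wm n v e i j \<ge> 0))"

definition pay_out :: "nat \<Rightarrow> (nat \<Rightarrow> real) \<Rightarrow> (nat \<Rightarrow> nat \<Rightarrow> real) \<Rightarrow> nat \<Rightarrow> real" where
  "pay_out n v e i = 0"

end

theory Submission
  imports Defs
begin

lemma sum_diff_if: "finite A \<Longrightarrow> (\<Sum>j\<in>A-{i}. (g j::real)) = (\<Sum>j\<in>A. if j = i then 0 else g j)"
  by (rule sum.mono_neutral_cong_left) auto
lemma sum_minus_swap:
  fixes f :: "nat \<Rightarrow> nat \<Rightarrow> real"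
  shows "(\<Sum>i\<in>{0..<n}. \<Sum>j\<in>{0..<n} - {i}. f i j) = (\<Sum>j\<in>{0..<n}. \<Sum>i\<in>{0..<n} - {j}. f i j)"
proof -
  have "(\<Sum>i\<in>{0..<n}. \<Sum>j\<in>{0..<n} - {i}. f i j) = (\<Sum>i\<in>{0..<n}. \<Sum>j\<in>{0..<n}. if j = i then 0 else f i j)"
    by (simp add: sum_diff_if)
  also have "\<dots> = (\<Sum>j\<in>{0..<n}. \<Sum>i\<in>{0..<n}. if j = i then 0 else f i j)"
    by (rule sum.swap)
  also have "\<dots> = (\<Sum>j\<in>{0..<n}. \<Sum>i\<in>{0..<n}. if i = j then 0 else f i j)"
    by (intro sum.cong refl) auto
  also have "\<dots> = (\<Sum>j\<in>{0..<n}. \<Sum>i\<in>{0..<n} - {j}. f i j)"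
    by (simp add: sum_diff_if)
  finally show ?thesis .
qed

lemma sw_eq: "social_welfare n v e z = (\<Sum>j\<in>{0..<n}. z j * W n v e j)"
proof -
  have 1: "social_welfare n v e z = (\<Sum>i\<in>{0..<n}. v i * z i) - (\<Sum>i\<in>{0..<n}. \<Sum>j\<in>{0..<n} - {i}. e i j * z j)"
    unfolding social_welfare_def valuation_def by (rule sum_subtractf)
  have 2: "(\<Sum>i\<in>{0..<n}. \<Sum>j\<in>{0..<n} - {i}. e i j * z j) = (\<Sum>j\<in>{0..<n}. \<Sum>i\<in>{0..<n} - {j}. e i j * z j)"
    by (rule sum_minus_swap)
  have 3: "(\<Sum>j\<in>{0..<n}. \<Sum>i\<in>{0..<n} - {j}. e i j * z j) = (\<Sum>j\<in>{0..<n}. z j * (\<Sum>i\<in>{0..<n} - {j}. e i j))"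
    by (simp add: sum_distrib_left mult.commute)
  have 4: "(\<Sum>i\<in>{0..<n}. v i * z i) - (\<Sum>j\<in>{0..<n}. z j * (\<Sum>i\<in>{0..<n} - {j}. e i j))
     = (\<Sum>j\<in>{0..<n}. z j * (v j - (\<Sum>i\<in>{0..<n} - {j}. e i j)))"
    unfolding right_diff_distrib sum_subtractf by (simp add: mult.commute)
  have "social_welfare n v e z = (\<Sum>j\<in>{0..<n}. z j * (v j - (\<Sum>i\<in>{0..<n} - {j}. e i j)))"
    using 1 2 3 4 by linarith
  then show ?thesis unfolding W_def .
qed

lemma ind_bound: assumes "0 \<le> z" "z \<le> (1::real)" shows "z * w \<le> ind (w \<ge> 0) * w"
proof (cases "w \<ge> 0")
  case True
  then have "z * w \<le> 1 * w" using assms by (intro mult_right_mono) auto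
  then show ?thesis using True by (simp add: ind_def)
next
  case False
  then have "z * w \<le> 0" using assms by (simp add: mult_nonneg_nonpos)
  then show ?thesis using False by (simp add: ind_def)
qed

lemma efficient:
  assumes "\<forall>j<n. 0 \<le> z j \<and> z j \<le> 1"
  shows "social_welfare n v e z \<le> social_welfare n v e (alloc n v e)"
  unfolding sw_eq alloc_def
  by (rule sum_mono) (rule ind_bound, use assms in auto)

lemma alloc_01: "\<forall>j<n. 0 \<le> alloc n v e j \<and> alloc n v e j \<le> 1"
  by (simp add: alloc_def ind_def)

lemma W_split: assumes "j < n" "j \<noteq> i" "i < n"
  shows "W n v e j = Wm n v e i j - e i j"
proof -
  have s: "{0..<n} - {j} = insert i ({0..<n} - {i, j})" using assms by auto
  have "i \<notin> {0..<n} - {i, j}" by simp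
  then have "(\<Sum>k\<in>{0..<n} - {j}. e k j) = e i j + (\<Sum>k\<in>{0..<n} - {i, j}. e k j)"
    unfolding s by (simp add: sum.insert)
  then show ?thesis unfolding W_def Wm_def by simp
qed

lemma L1: assumes "i < n"
  shows "valuation n v e i x = social_welfare n v e x - (\<Sum>j\<in>{0..<n}-{i}. x j * Wm n v e i j)
           + x i * (\<Sum>k\<in>{0..<n}-{i}. e k i)"
proof -
  have A: "{0..<n} = insert i ({0..<n} - {i})" using assms by auto
  have "social_welfare n v e x = x i * W n v e i + (\<Sum>j\<in>{0..<n}-{i}. x j * W n v e j)"
    unfolding sw_eq by (subst A) (simp add: sum.insert_remove)
  also have "(\<Sum>j\<in>{0..<n}-{i}. x j * W n v e j) = (\<Sum>j\<in>{0..<n}-{i}. x j * Wm n v e i j - e i j * x j)"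
  proof (rule sum.cong[OF refl])
    fix j assume "j \<in> {0..<n}-{i}"
    then have "W n v e j = Wm n v e i j - e i j" using W_split[of j n i] assms by auto
    then show "x j * W n v e j = x j * Wm n v e i j - e i j * x j" by (simp add: right_diff_distrib mult.commute)
  qed
  also have "(\<Sum>j\<in>{0..<n}-{i}. x j * Wm n v e i j - e i j * x j)
     = (\<Sum>j\<in>{0..<n}-{i}. x j * Wm n v e i j) - (\<Sum>j\<in>{0..<n}-{i}. e i j * x j)"
    by (rule sum_subtractf)
  also have "x i * W n v e i = v i * x i - x i * (\<Sum>k\<in>{0..<n}-{i}. e k i)"
    by (simp add: W_def right_diff_distrib mult.commute)
  finally show ?thesis
    unfolding valuation_def by linarith
qed

definition H where "H n v e i = (\<Sum>j\<in>{0..<n}-{i}. Wm n v e i j * ind (Wm n v e i j \<ge> 0))"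

lemma pay_eq: "pay n v e i = H n v e i - (\<Sum>j\<in>{0..<n}-{i}. alloc n v e j * Wm n v e i j)
           + alloc n v e i * (\<Sum>k\<in>{0..<n}-{i}. e k i)"
proof -
  have "pay n v e i = (\<Sum>j\<in>{0..<n}-{i}. (Wm n v e i j * ind (Wm n v e i j \<ge> 0)
          - alloc n v e j * Wm n v e i j) + alloc n v e i * e j i)"
    unfolding pay_def alloc_def by (intro sum.cong refl) (simp add: right_diff_distrib mult.commute)
  also have "\<dots> = H n v e i - (\<Sum>j\<in>{0..<n}-{i}. alloc n v e j * Wm n v e i j)
           + alloc n v e i * (\<Sum>k\<in>{0..<n}-{i}. e k i)"
    unfolding H_def sum.distrib sum_subtractf sum_distrib_left ..
  finally show ?thesis .
qed

lemma util_true: assumes "i < n"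
  shows "utility n v e i (alloc n v e) (pay n v e i) = social_welfare n v e (alloc n v e) - H n v e i"
  unfolding utility_def using L1[OF assms, of v e "alloc n v e"] pay_eq[of n v e i] by linarith

lemma val_upd: "valuation n v e i x = valuation n (v'(i := v i)) (e'(i := e i)) i x"
  unfolding valuation_def by simp

lemma Wm_upd: "j \<noteq> i \<Longrightarrow> Wm n (v'(i := a)) (e'(i := b)) i j = Wm n v' e' i j"
  unfolding Wm_def by (intro arg_cong2[where f="(-)"] sum.cong) auto

lemma H_upd: "H n (v'(i := a)) (e'(i := b)) i = H n v' e' i"
  unfolding H_def by (intro sum.cong refl) (simp add: Wm_upd)

theorem mainTheorem3:
  fixes n :: nat
    and vlo vhi :: "nat \<Rightarrow> real" and elo ehi :: "nat \<Rightarrow> nat \<Rightarrow> real"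
  assumes vlo_nonneg: "\<forall>i<n. 0 \<le> vlo i \<and> vlo i \<le> vhi i"
      and elo_nonneg: "\<forall>i<n. \<forall>j<n. j \<noteq> i \<longrightarrow> 0 \<le> elo i j \<and> elo i j \<le> ehi i j"
  shows
    \<comment> \<open>(a) efficiency\<close>
    "(\<forall>v e. in_T n vlo vhi elo ehi v e \<longrightarrow>
        (\<forall>z. (\<forall>j<n. 0 \<le> z j \<and> z j \<le> 1) \<longrightarrow>
           social_welfare n v e z \<le> social_welfare n v e (alloc n v e)))
     \<comment> \<open>(b) DSIC\<close>
     \<and> (\<forall>v e v' e'. in_T n vlo vhi elo ehi v e \<longrightarrow> in_T n vlo vhi elo ehi v' e' \<longrightarrow>
        (\<forall>i<n. utility n v e i (alloc n (v'(i := v i)) (e'(i := e i)))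
                   (pay n (v'(i := v i)) (e'(i := e i)) i)
              \<ge> utility n v e i (alloc n v' e') (pay n v' e' i)))
     \<comment> \<open>(c) ex-post IR\<close>
     \<and> (\<forall>v e. in_T n vlo vhi elo ehi v e \<longrightarrow>
        (\<forall>i<n. utility n v e i (alloc n v e) (pay n v e i)
              \<ge> utility n v e i (alloc_out n v e i) (pay_out n v e i)))
     \<comment> \<open>(d) nonnegative payments\<close>
     \<and> (\<forall>v e. in_T n vlo vhi elo ehi v e \<longrightarrow> (\<forall>i<n. pay n v e i \<ge> 0))"
proof (intro conjI allI impI)
  fix v :: "nat \<Rightarrow> real" and e :: "nat \<Rightarrow> nat \<Rightarrow> real" and z :: "nat \<Rightarrow> real" assume "\<forall>j<n. 0 \<le> z j \<and> z j \<le> 1"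
  then show "social_welfare n v e z \<le> social_welfare n v e (alloc n v e)" by (rule efficient)
next
  fix v v' :: "nat \<Rightarrow> real" and e e' :: "nat \<Rightarrow> nat \<Rightarrow> real" and i assume i: "i < n"
  define vr where "vr = v'(i := v i)"
  define er where "er = e'(i := e i)"
  define x where "x = alloc n v' e'"
  define xr where "xr = alloc n vr er"
  have vu: "\<And>y. valuation n v e i y = valuation n vr er i y"
    unfolding vr_def er_def valuation_def by simp
  have Hr: "H n vr er i = H n v' e' i" unfolding vr_def er_def by (rule H_upd)
  have e1: "utility n v e i xr (pay n vr er i) = social_welfare n vr er xr - H n v' e' i"
  proof -
    have "utility n v e i xr (pay n vr er i) = utility n vr er i xr (pay n vr er i)"
      by (simp only: utility_def vu)
    also have "\<dots> = social_welfare n vr er xr - H n vr er i"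
      unfolding xr_def by (rule util_true[OF i])
    finally show ?thesis using Hr by simp
  qed
  have s1: "(\<Sum>j\<in>{0..<n}-{i}. x j * Wm n vr er i j) = (\<Sum>j\<in>{0..<n}-{i}. x j * Wm n v' e' i j)"
    unfolding vr_def er_def by (intro sum.cong refl) (simp add: Wm_upd)
  have s2: "(\<Sum>k\<in>{0..<n}-{i}. er k i) = (\<Sum>k\<in>{0..<n}-{i}. e' k i)"
    unfolding er_def by (intro sum.cong refl) simp
  have L: "valuation n vr er i x = social_welfare n vr er x - (\<Sum>j\<in>{0..<n}-{i}. x j * Wm n vr er i j)
           + x i * (\<Sum>k\<in>{0..<n}-{i}. er k i)" by (rule L1[OF i])
  have P: "pay n v' e' i = H n v' e' i - (\<Sum>j\<in>{0..<n}-{i}. x j * Wm n v' e' i j)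
           + x i * (\<Sum>k\<in>{0..<n}-{i}. e' k i)" unfolding x_def by (rule pay_eq)
  have e2: "utility n v e i x (pay n v' e' i) = social_welfare n vr er x - H n v' e' i"
    unfolding utility_def vu[of x] L P s1 s2 by simp
  have "social_welfare n vr er x \<le> social_welfare n vr er xr"
    unfolding xr_def x_def by (rule efficient[OF alloc_01])
  then have "utility n v e i x (pay n v' e' i) \<le> utility n v e i xr (pay n vr er i)"
    using e1 e2 by simp
  then show "utility n v e i (alloc n v' e') (pay n v' e' i) \<le> utility n v e i (alloc n (v'(i := v i)) (e'(i := e i))) (pay n (v'(i := v i)) (e'(i := e i)) i)"
    unfolding x_def xr_def vr_def er_def .
next
  fix v :: "nat \<Rightarrow> real" and e :: "nat \<Rightarrow> nat \<Rightarrow> real" and i assume i: "i < n"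
  let ?xo = "alloc_out n v e i"
  have s: "(\<Sum>j\<in>{0..<n}-{i}. ?xo j * Wm n v e i j) = H n v e i"
    unfolding H_def alloc_out_def by (intro sum.cong refl) (simp add: mult.commute)
  have L: "valuation n v e i ?xo = social_welfare n v e ?xo - (\<Sum>j\<in>{0..<n}-{i}. ?xo j * Wm n v e i j)
           + ?xo i * (\<Sum>k\<in>{0..<n}-{i}. e k i)" by (rule L1[OF i])
  have "?xo i = 0" by (simp add: alloc_out_def)
  then have u: "utility n v e i ?xo (pay_out n v e i) = social_welfare n v e ?xo - H n v e i"
    unfolding utility_def pay_out_def L s by simp
  have "social_welfare n v e ?xo \<le> social_welfare n v e (alloc n v e)"
    by (rule efficient) (simp add: alloc_out_def ind_def)
  then show "utility n v e i ?xo (pay_out n v e i) \<le> utility n v e i (alloc n v e) (pay n v e i)"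
    unfolding u util_true[OF i] by simp
next
  fix v :: "nat \<Rightarrow> real" and e :: "nat \<Rightarrow> nat \<Rightarrow> real" and i assume T: "in_T n vlo vhi elo ehi v e" and i: "i < n"
  have eij: "\<And>k j. k < n \<Longrightarrow> j < n \<Longrightarrow> j \<noteq> k \<Longrightarrow> 0 \<le> e k j"
  proof -
    fix k j assume "k < n" "j < n" "j \<noteq> k"
    then have "elo k j \<le> e k j" "0 \<le> elo k j" using T elo_nonneg unfolding in_T_def by auto
    then show "0 \<le> e k j" by linarith
  qed
  show "0 \<le> pay n v e i"
    unfolding pay_def
  proof (rule sum_nonneg)
    fix j assume j: "j \<in> {0..<n} - {i}"
    have Wl: "W n v e j = Wm n v e i j - e i j" using W_split[of j n i] j i by auto
    have "0 \<le> e i j" using eij[of i j] j i by auto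
    then have a: "0 \<le> Wm n v e i j * (ind (Wm n v e i j \<ge> 0) - ind (W n v e j \<ge> 0))"
      using Wl unfolding ind_def by auto
    have "0 \<le> e j i * ind (W n v e i \<ge> 0)" using eij[of j i] j i unfolding ind_def by auto
    with a show "0 \<le> Wm n v e i j * (ind (Wm n v e i j \<ge> 0) - ind (W n v e j \<ge> 0)) + e j i * ind (W n v e i \<ge> 0)"
      by simp
  qed
qed

end
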